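(* Let $Q$ be an equivariantly supported quantale with base locale $Q_0$ and support $\varsigma$. Then the map $Q_0\to R(Q)$ defined by $a\mapsto a\triangleright1_Q$ is an order isomorphism whose inverse is the restriction $\varsigma:R(Q)\to Q_0$. In particular, $R(Q)$ is a locale.
   Context: For a locale $A$, an $A$-$A$-bimodule is a sup-lattice $M$ with actions $a\triangleright m$, $m\triangleleft a$ preserving joins in each variable, with $1_A\triangleright m=m$, $(a\wedge b)\triangleright m=a\triangleright(b\triangleright m)$, $m\triangleleft1_A=m$, $m\triangleleft(a\wedge b)=(m\triangleleft a)\triangleleft b$, $(a\triangleright m)\triangleleft b=a\triangleright(m\triangleleft b)$. An $A$-$A$-quantale is such a $Q$ with associative join-preserving multiplication and $(a\triangleright x)y=a\triangleright(xy)$, $(x\triangleleft a)y=x(a\triangleright y)$, $(xy)\triangleleft a=x(y\triangleleft a)$; involutive if there is a join-preserving $x\mapsto x^*$ with $x^{**}=x$, $(xy)^*=y^*x^*$, $(a\triangleright(x\triangleleft b))^*=b\triangleright(x^*\triangleleft a)$. A based quantale is an involutive $Q_0$-$Q_0$-quantale for some locale $Q_0$; $1_Q$ is its top. A support is a join-preserving $\varsigma:Q\to Q_0$ with $\varsigma(1_Q)=1_{Q_0}$, $\varsigma(x)\triangleright y\le xx^*y$, $\varsigma(x)\triangleright x=x$; equivariant if $\varsigma(a\triangleright x)=a\wedge\varsigma(x)$. An equivariantly supported quantale is a based quantale with an equivariant support. $R(Q)=\{x\in Q\mid x1_Q\le x\}$ is the set of right-sided elements. *)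

theory Defs
  imports Main
begin

text \<open>Locales (frames): complete lattices in which binary meets distribute over
arbitrary joins. Top is 1, meet is inf.\<close>
class frame = complete_lattice +
  assumes inf_Sup_frame: "inf a (Sup S) = (SUP s\<in>S. inf a s)"

locale eq_supported_quantale =
  fixes lact :: "'a::frame \<Rightarrow> 'q::complete_lattice \<Rightarrow> 'q"
    and ract :: "'q \<Rightarrow> 'a \<Rightarrow> 'q"
    and mult :: "'q \<Rightarrow> 'q \<Rightarrow> 'q"
    and inv :: "'q \<Rightarrow> 'q"
    and supp :: "'q \<Rightarrow> 'a"
  assumes lact_Sup_left: "\<And>A m. lact (Sup A) m = (SUP a\<in>A. lact a m)"
    and lact_Sup_right: "\<And>a M. lact a (Sup M) = (SUP m\<in>M. lact a m)"
    and ract_Sup_left: "\<And>M a. ract (Sup M) a = (SUP m\<in>M. ract m a)"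
    and ract_Sup_right: "\<And>m A. ract m (Sup A) = (SUP a\<in>A. ract m a)"
    and lact_top: "\<And>m. lact top m = m"
    and lact_inf: "\<And>a b m. lact (inf a b) m = lact a (lact b m)"
    and ract_top: "\<And>m. ract m top = m"
    and ract_inf: "\<And>a b m. ract m (inf a b) = ract (ract m a) b"
    and lact_ract: "\<And>a b m. ract (lact a m) b = lact a (ract m b)"
    and mult_assoc: "\<And>x y z. mult (mult x y) z = mult x (mult y z)"
    and mult_Sup_left: "\<And>X y. mult (Sup X) y = (SUP x\<in>X. mult x y)"
    and mult_Sup_right: "\<And>x Y. mult x (Sup Y) = (SUP y\<in>Y. mult x y)"
    and lact_mult: "\<And>a x y. mult (lact a x) y = lact a (mult x y)"
    and ract_mult_lact: "\<And>a x y. mult (ract x a) y = mult x (lact a y)"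
    and mult_ract: "\<And>a x y. ract (mult x y) a = mult x (ract y a)"
    and inv_Sup: "\<And>X. inv (Sup X) = (SUP x\<in>X. inv x)"
    and inv_inv: "\<And>x. inv (inv x) = x"
    and inv_mult: "\<And>x y. inv (mult x y) = mult (inv y) (inv x)"
    and inv_act: "\<And>a b x. inv (lact a (ract x b)) = lact b (ract (inv x) a)"
    and supp_Sup: "\<And>X. supp (Sup X) = (SUP x\<in>X. supp x)"
    and supp_top: "supp top = top"
    and supp_le: "\<And>x y. lact (supp x) y \<le> mult (mult x (inv x)) y"
    and supp_lact_self: "\<And>x. lact (supp x) x = x"
    and supp_equivariant: "\<And>a x. supp (lact a x) = inf a (supp x)"

definition right_sided :: "('q::complete_lattice \<Rightarrow> 'q \<Rightarrow> 'q) \<Rightarrow> 'q set" where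
  "right_sided mult = {x. mult x top \<le> x}"

definition is_lub_in :: "'q::order set \<Rightarrow> 'q set \<Rightarrow> 'q \<Rightarrow> bool" where
  "is_lub_in R X s \<longleftrightarrow> s \<in> R \<and> (\<forall>x\<in>X. x \<le> s) \<and> (\<forall>u\<in>R. (\<forall>x\<in>X. x \<le> u) \<longrightarrow> s \<le> u)"

definition is_glb_in :: "'q::order set \<Rightarrow> 'q set \<Rightarrow> 'q \<Rightarrow> bool" where
  "is_glb_in R X s \<longleftrightarrow> s \<in> R \<and> (\<forall>x\<in>X. s \<le> x) \<and> (\<forall>u\<in>R. (\<forall>x\<in>X. u \<le> x) \<longrightarrow> u \<le> s)"

definition is_frame_subset :: "'q::order set \<Rightarrow> bool" where
  "is_frame_subset R \<longleftrightarrow>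
     (\<forall>X\<subseteq>R. \<exists>s. is_lub_in R X s) \<and>
     (\<forall>X\<subseteq>R. \<exists>s. is_glb_in R X s) \<and>
     (\<forall>a\<in>R. \<forall>X\<subseteq>R. \<forall>s m. is_lub_in R X s \<and> is_glb_in R {a, s} m \<longrightarrow>
        is_lub_in R {c. \<exists>x\<in>X. is_glb_in R {a, x} c} m)"

end

theory Submission
  imports Defs
begin

lemma lub_unique: "is_lub_in R X s \<Longrightarrow> is_lub_in R X t \<Longrightarrow> s = t"
  unfolding is_lub_in_def by (meson antisym)

lemma glb_unique: "is_glb_in R X s \<Longrightarrow> is_glb_in R X t \<Longrightarrow> s = t"
  unfolding is_glb_in_def by (meson antisym)

lemma iso_frame:
  fixes f :: "'a::frame \<Rightarrow> 'q::order" and g :: "'q \<Rightarrow> 'a"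
  assumes ord: "\<And>a b. f a \<le> f b \<longleftrightarrow> a \<le> b"
    and fR: "\<And>a. f a \<in> R"
    and fg: "\<And>x. x \<in> R \<Longrightarrow> f (g x) = x"
  shows "is_frame_subset R"
proof -
  have gf: "g (f a) = a" for a
    using fg[OF fR[of a]] ord by (metis antisym order_refl)
  have lub: "is_lub_in R X (f (SUP x\<in>X. g x))" if "X \<subseteq> R" for X
    unfolding is_lub_in_def
  proof (intro conjI ballI impI)
    show "f (SUP x\<in>X. g x) \<in> R" by (rule fR)
    fix x assume "x \<in> X"
    then show "x \<le> f (SUP x\<in>X. g x)"
      using that fg ord by (metis SUP_upper subsetD)
  next
    fix u assume u: "u \<in> R" "\<forall>x\<in>X. x \<le> u"
    have "(SUP x\<in>X. g x) \<le> g u"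
    proof (rule SUP_least)
      fix x assume "x \<in> X"
      then have "f (g x) \<le> f (g u)" using u that fg by auto
      then show "g x \<le> g u" using ord by simp
    qed
    then show "f (SUP x\<in>X. g x) \<le> u" using ord fg u by metis
  qed
  have glb: "is_glb_in R X (f (INF x\<in>X. g x))" if "X \<subseteq> R" for X
    unfolding is_glb_in_def
  proof (intro conjI ballI impI)
    show "f (INF x\<in>X. g x) \<in> R" by (rule fR)
    fix x assume "x \<in> X"
    then show "f (INF x\<in>X. g x) \<le> x"
      using that fg ord by (metis INF_lower subsetD)
  next
    fix u assume u: "u \<in> R" "\<forall>x\<in>X. u \<le> x"
    have "g u \<le> (INF x\<in>X. g x)"
    proof (rule INF_greatest)
      fix x assume "x \<in> X"
      then have "f (g u) \<le> f (g x)" using u that fg by auto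
      then show "g u \<le> g x" using ord by simp
    qed
    then show "u \<le> f (INF x\<in>X. g x)" using ord fg u by metis
  qed
  have glb2: "is_glb_in R {a, x} (f (inf (g a) (g x)))" if "a \<in> R" "x \<in> R" for a x
    using glb[of "{a, x}"] that by simp
  show ?thesis
    unfolding is_frame_subset_def
  proof (intro conjI allI impI ballI)
    fix X assume "X \<subseteq> R" then show "\<exists>s. is_lub_in R X s" using lub by blast
  next
    fix X assume "X \<subseteq> R" then show "\<exists>s. is_glb_in R X s" using glb by blast
  next
    fix a X s m assume a: "a \<in> R" and X: "X \<subseteq> R" and sm: "is_lub_in R X s \<and> is_glb_in R {a, s} m"
    have s: "s = f (SUP x\<in>X. g x)" using lub_unique lub[OF X] sm by blast
    have sR: "s \<in> R" using s fR by simp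
    have m: "m = f (inf (g a) (g s))" using glb_unique glb2[OF a sR] sm by blast
    have gs: "g s = (SUP x\<in>X. g x)" using s gf by simp
    have C: "{c. \<exists>x\<in>X. is_glb_in R {a, x} c} = (\<lambda>x. f (inf (g a) (g x))) ` X"
      using glb2[OF a] glb_unique X by blast
    have eq: "inf (g a) (g s) = (SUP x\<in>X. inf (g a) (g x))"
      using gs inf_Sup_frame[of "g a" "g ` X"] by (simp add: image_image)
    show "is_lub_in R {c. \<exists>x\<in>X. is_glb_in R {a, x} c} m"
      unfolding C is_lub_in_def
    proof (intro conjI ballI impI)
      show "m \<in> R" using m fR by simp
      fix c assume "c \<in> (\<lambda>x. f (inf (g a) (g x))) ` X"
      then obtain x where x: "x \<in> X" "c = f (inf (g a) (g x))" by blast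
      show "c \<le> m" unfolding m x(2) ord eq using x(1) by (rule SUP_upper2) simp
    next
      fix u assume u: "u \<in> R" "\<forall>c\<in>(\<lambda>x. f (inf (g a) (g x))) ` X. c \<le> u"
      have "(SUP x\<in>X. inf (g a) (g x)) \<le> g u"
      proof (rule SUP_least)
        fix x assume "x \<in> X"
        then have "f (inf (g a) (g x)) \<le> f (g u)" using u fg by auto
        then show "inf (g a) (g x) \<le> g u" using ord by simp
      qed
      then show "m \<le> u" unfolding m eq using ord fg u by metis
    qed
  qed
qed

context eq_supported_quantale
begin

lemma lact_mono: "a \<le> b \<Longrightarrow> lact a m \<le> lact b m"
proof -
  assume h: "a \<le> b"
  have "lact b m = lact (Sup {a,b}) m" using h by (simp add: sup.absorb2)
  also have "\<dots> = sup (lact a m) (lact b m)" using lact_Sup_left[of "{a,b}" m] by simp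
  finally show ?thesis by (metis sup.cobounded1)
qed

lemma lact_mono2: "m \<le> n \<Longrightarrow> lact a m \<le> lact a n"
proof -
  assume h: "m \<le> n"
  have "lact a n = lact a (Sup {m,n})" using h by (simp add: sup.absorb2)
  also have "\<dots> = sup (lact a m) (lact a n)" using lact_Sup_right[of a "{m,n}"] by simp
  finally show ?thesis by (metis sup.cobounded1)
qed

lemma mult_mono2: "y \<le> z \<Longrightarrow> mult x y \<le> mult x z"
proof -
  assume h: "y \<le> z"
  have "mult x z = mult x (Sup {y,z})" using h by (simp add: sup.absorb2)
  also have "\<dots> = sup (mult x y) (mult x z)" using mult_Sup_right[of x "{y,z}"] by simp
  finally show ?thesis by (metis sup.cobounded1)
qed

lemma supp_lact_top: "supp (lact a top) = a"
  using supp_equivariant supp_top by simp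

lemma rs: "lact a top \<in> right_sided mult"
  unfolding right_sided_def using lact_mult[of a top top] lact_mono2[of "mult top top" top a] by simp

lemma rs_inv: "x \<in> right_sided mult \<Longrightarrow> lact (supp x) top = x"
proof -
  assume "x \<in> right_sided mult"
  then have x: "mult x top \<le> x" by (simp add: right_sided_def)
  have "lact (supp x) top \<le> mult (mult x (inv x)) top" by (rule supp_le)
  also have "\<dots> = mult x (mult (inv x) top)" by (rule mult_assoc)
  also have "\<dots> \<le> mult x top" by (rule mult_mono2) simp
  finally have 1: "lact (supp x) top \<le> x" using x by simp
  have "x \<le> lact (supp x) top" using lact_mono2[of x top "supp x"] supp_lact_self by simp
  with 1 show ?thesis by simp
qed

lemma ord_iff: "a \<le> b \<longleftrightarrow> lact a top \<le> lact b top"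
proof
  assume "lact a top \<le> lact b top"
  then have "supp (lact b top) = sup (supp (lact a top)) (supp (lact b top))"
    using supp_Sup[of "{lact a top, lact b top}"] by (simp add: sup.absorb2)
  then show "a \<le> b" by (simp add: supp_lact_top sup.absorb_iff2)
qed (rule lact_mono)

end

theorem corollary3p18:
  fixes lact :: "'a::frame \<Rightarrow> 'q::complete_lattice \<Rightarrow> 'q"
    and ract :: "'q \<Rightarrow> 'a \<Rightarrow> 'q"
    and mult :: "'q \<Rightarrow> 'q \<Rightarrow> 'q"
    and inv :: "'q \<Rightarrow> 'q"
    and supp :: "'q \<Rightarrow> 'a"
  assumes "eq_supported_quantale lact ract mult inv supp"
  shows "bij_betw (\<lambda>a. lact a top) UNIV (right_sided mult)
     \<and> (\<forall>a b. a \<le> b \<longleftrightarrow> lact a top \<le> lact b top)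
     \<and> (\<forall>a. supp (lact a top) = a)
     \<and> (\<forall>x\<in>right_sided mult. lact (supp x) top = x)
     \<and> is_frame_subset (right_sided mult)"
proof -
  interpret Q: eq_supported_quantale lact ract mult inv supp by (rule assms)
  have bij: "bij_betw (\<lambda>a. lact a top) UNIV (right_sided mult)"
  proof (rule bij_betw_byWitness[where f' = supp])
    show "\<forall>a\<in>UNIV. supp (lact a top) = a" using Q.supp_lact_top by blast
    show "\<forall>x\<in>right_sided mult. lact (supp x) top = x" using Q.rs_inv by blast
    show "(\<lambda>a. lact a top) ` UNIV \<subseteq> right_sided mult" using Q.rs by blast
    show "supp ` right_sided mult \<subseteq> UNIV" by simp
  qed
  have fr: "is_frame_subset (right_sided mult)"
    by (rule iso_frame[of "\<lambda>a. lact a top" "right_sided mult" supp])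
      (simp_all only: Q.ord_iff[symmetric] Q.rs Q.rs_inv)
  show ?thesis
    by (intro conjI allI ballI bij fr Q.ord_iff Q.supp_lact_top Q.rs_inv)
qed

end
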